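(* Let $n\ge 1$, $m\ge1$ and $W=A_{n-1}$. Then $$\sum_{R}q^{\operatorname{coh}(R)}=\sum_{D\in\mathcal{D}^{(m)}_n}q^{\operatorname{area}(D)},$$ where $R$ ranges over the positive regions of the extended Shi arrangement $\mathsf{Shi}^{(m)}(A_{n-1})$.
   Context: For a crystallographic reflection group $W$ acting on a real Euclidean space $V$ with root system $\Phi$ and positive roots $\Phi^+$ ($N=|\Phi^+|$), the extended Shi arrangement $\mathsf{Shi}^{(m)}(W)$ consists of the hyperplanes $H^{(k)}_\alpha=\{x:(\alpha,x)=k\}$ for $\alpha\in\Phi^+$, $-m<k\le m$. A region is a connected component of the complement of these hyperplanes; it is positive if it lies in the fundamental chamber $\{x:(\alpha,x)>0\ \forall\alpha\in\Phi^+\}$. Let $R^0=\{x:0<(\alpha,x)<1\ \forall\alpha\in\Phi^+\}$; the height of a region $R$ is the number of hyperplanes of $\mathsf{Shi}^{(m)}(W)$ separating $R$ from $R^0$, and $\operatorname{coh}(R)=mN-\operatorname{height}(R)$. For $A_{n-1}$, $\Phi^+=\{e_j-e_i:1\le i<j\le n\}$ in $\{x\in\mathbb{R}^n:\sum x_i=0\}$. $\mathcal{D}^{(m)}_n$ is the set of $m$-Dyck paths of semilength $n$: north-east lattice paths from $(0,0)$ to $(mn,n)$ (unit north and east steps) staying weakly above the line $x=my$; $\operatorname{area}(D)$ is the number of full unit lattice squares lying between $D$ and the line $x=my$. *)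

theory Defs
  imports "HOL-Analysis.Analysis"
begin

text \<open>Type A_{n-1}: the ambient space V = {x in R^n : sum x_i = 0}, with coordinates
  indexed by 0..n-1 and realised inside nat => real (product topology; coordinates
  >= n are zero).  Positive roots e_j - e_i (i < j < n), so (alpha, x) = x j - x i.\<close>

definition V_A :: "nat \<Rightarrow> (nat \<Rightarrow> real) set" where
  "V_A n = {x. (\<forall>i\<ge>n. x i = 0) \<and> (\<Sum>i<n. x i) = 0}"

text \<open>Hyperplanes H^{(k)}_{e_j - e_i} of Shi^{(m)}(A_{n-1}): triples (i,j,k), i<j<n, -m<k<=m.\<close>
definition shi_hyps :: "nat \<Rightarrow> nat \<Rightarrow> (nat \<times> nat \<times> int) set" where
  "shi_hyps n m = {(i, j, k). i < j \<and> j < n \<and> - int m < k \<and> k \<le> int m}"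

definition shi_complement :: "nat \<Rightarrow> nat \<Rightarrow> (nat \<Rightarrow> real) set" where
  "shi_complement n m = {x \<in> V_A n. \<forall>(i, j, k) \<in> shi_hyps n m. x j - x i \<noteq> of_int k}"

definition shi_regions :: "nat \<Rightarrow> nat \<Rightarrow> (nat \<Rightarrow> real) set set" where
  "shi_regions n m = {connected_component_set (shi_complement n m) x | x. x \<in> shi_complement n m}"

definition fund_chamber :: "nat \<Rightarrow> (nat \<Rightarrow> real) set" where
  "fund_chamber n = {x \<in> V_A n. \<forall>i j. i < j \<and> j < n \<longrightarrow> 0 < x j - x i}"

definition R0_A :: "nat \<Rightarrow> (nat \<Rightarrow> real) set" where
  "R0_A n = {x \<in> V_A n. \<forall>i j. i < j \<and> j < n \<longrightarrow> 0 < x j - x i \<and> x j - x i < 1}"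

definition separates :: "nat \<times> nat \<times> int \<Rightarrow> (nat \<Rightarrow> real) set \<Rightarrow> (nat \<Rightarrow> real) set \<Rightarrow> bool" where
  "separates h A B = (case h of (i, j, k) \<Rightarrow>
     \<exists>x\<in>A. \<exists>y\<in>B. (x j - x i < of_int k \<and> of_int k < y j - y i) \<or>
                  (y j - y i < of_int k \<and> of_int k < x j - x i))"

definition shi_height :: "nat \<Rightarrow> nat \<Rightarrow> (nat \<Rightarrow> real) set \<Rightarrow> nat" where
  "shi_height n m R = card {h \<in> shi_hyps n m. separates h R (R0_A n)}"

definition num_pos_roots_A :: "nat \<Rightarrow> nat" where
  "num_pos_roots_A n = card {(i, j). i < j \<and> j < (n::nat)}"

definition shi_coh :: "nat \<Rightarrow> nat \<Rightarrow> (nat \<Rightarrow> real) set \<Rightarrow> nat" where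
  "shi_coh n m R = m * num_pos_roots_A n - shi_height n m R"

text \<open>m-Dyck paths: lists of steps, True = north (0,1), False = east (1,0),
  from (0,0) to (mn,n), every prefix satisfies #east <= m * #north (weakly above x = m y).\<close>
definition n_north :: "bool list \<Rightarrow> nat" where
  "n_north D = length (filter id D)"

definition n_east :: "bool list \<Rightarrow> nat" where
  "n_east D = length (filter Not D)"

definition dyck_paths :: "nat \<Rightarrow> nat \<Rightarrow> bool list set" where
  "dyck_paths m n = {D. n_north D = n \<and> n_east D = m * n \<and>
      (\<forall>i\<le>length D. n_east (take i D) \<le> m * n_north (take i D))}"

text \<open>x-coordinate of the path within row y (the strip y <= height <= y+1):
  the number of east steps taken at heights <= y.\<close>
definition path_x :: "bool list \<Rightarrow> nat \<Rightarrow> nat" where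
  "path_x D y = card {i. i < length D \<and> \<not> D ! i \<and> n_north (take i D) \<le> y}"

text \<open>Area: number of unit squares [a,a+1] x [y,y+1] lying between the path (to its right)
  and the line x = m y (to its left), i.e. path_x D y <= a and a + 1 <= m y.\<close>
definition dyck_area :: "nat \<Rightarrow> nat \<Rightarrow> bool list \<Rightarrow> nat" where
  "dyck_area m n D = card {(a, y). y < n \<and> path_x D y \<le> a \<and> a + 1 \<le> m * y}"

end

theory Submission
  imports Defs
begin


fun px :: "bool list \<Rightarrow> nat \<Rightarrow> nat" where
  "px [] y = 0"
| "px (True # D) y = (if y = 0 then 0 else px D (y - 1))"
| "px (False # D) y = Suc (px D y)"

lemma card_Suc_split:
  "card {i. i < Suc k \<and> Q i} = (if Q 0 then 1 else 0) + card {i. i < k \<and> Q (Suc i)}"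
proof -
  have e: "{i. i < Suc k \<and> Q i} = (if Q 0 then {0} else {}) \<union> Suc ` {i. i < k \<and> Q (Suc i)}"
    by (auto simp: less_Suc_eq_0_disj image_iff)
  have "card ((if Q 0 then {0} else {}) \<union> Suc ` {i. i < k \<and> Q (Suc i)})
      = card (if Q 0 then {0::nat} else {}) + card (Suc ` {i. i < k \<and> Q (Suc i)})"
    by (rule card_Un_disjoint) auto
  also have "card (Suc ` {i. i < k \<and> Q (Suc i)}) = card {i. i < k \<and> Q (Suc i)}"
    by (rule card_image) auto
  finally show ?thesis using e by simp
qed

lemma n_north_Cons[simp]: "n_north (a # D) = (if a then Suc (n_north D) else n_north D)"
  by (simp add: n_north_def)
lemma n_east_Cons[simp]: "n_east (a # D) = (if a then n_east D else Suc (n_east D))"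
  by (simp add: n_east_def)
lemma n_north_Nil[simp]: "n_north [] = 0" by (simp add: n_north_def)
lemma n_east_Nil[simp]: "n_east [] = 0" by (simp add: n_east_def)

lemma path_x_px: "path_x D y = px D y"
proof (induction D arbitrary: y)
  case Nil
  then show ?case by (simp add: path_x_def)
next
  case (Cons a D)
  have "path_x (a # D) y = (if \<not> a then 1 else 0) +
     card {i. i < length D \<and> \<not> D ! i \<and> n_north (take (Suc i) (a # D)) \<le> y}"
    unfolding path_x_def using card_Suc_split[of "length D" "\<lambda>i. \<not> (a # D) ! i \<and> n_north (take i (a # D)) \<le> y"]
    by simp
  show ?case
  proof (cases a)
    case True
    show ?thesis
    proof (cases y)
      case 0
      then show ?thesis using True \<open>path_x (a # D) y = _\<close> by simp
    next
      case (Suc y')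
      then show ?thesis using True \<open>path_x (a # D) y = _\<close> Cons.IH[of y'] by (simp add: path_x_def)
    qed
  next
    case False
    then show ?thesis using \<open>path_x (a # D) y = _\<close> Cons.IH[of y] by (simp add: path_x_def)
  qed
qed


lemma px_mono: "px D y \<le> px D (Suc y)"
proof (induction D arbitrary: y)
  case (Cons a D) then show ?case by (cases a; cases y) (simp_all add: Cons.IH)
qed simp

lemma px_L1: "y < n_north D \<Longrightarrow> \<exists>i \<le> length D. n_north (take i D) = y \<and> n_east (take i D) = px D y"
proof (induction D arbitrary: y)
  case Nil then show ?case by simp
next
  case (Cons a D)
  show ?case
  proof (cases a)
  case True note 2 = Cons[unfolded True]
  show ?thesis
  proof (cases y)
    case 0 then show ?thesis using True by (intro exI[of _ 0]) simp
  next
    case (Suc y')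
    with 2 True obtain i where "i \<le> length D" "n_north (take i D) = y'" "n_east (take i D) = px D y'" by auto
    then show ?thesis using Suc True by (intro exI[of _ "Suc i"]) simp
  qed
next
  case False note 3 = Cons[unfolded False]
  then obtain i where "i \<le> length D" "n_north (take i D) = y" "n_east (take i D) = px D y" using False by auto
  then show ?thesis using False by (intro exI[of _ "Suc i"]) simp
qed
qed

lemma px_L2: "n_north (take i D) < n_north D \<Longrightarrow> n_east (take i D) \<le> px D (n_north (take i D))"
proof (induction D arbitrary: i)
  case Nil then show ?case by simp
next
  case (Cons a D)
  then show ?case by (cases i; cases a) auto
qed

lemma n_east_take_le: "n_east (take i D) \<le> n_east D"
proof -
  have "D = take i D @ drop i D" by simp
  then have "n_east D = n_east (take i D) + n_east (drop i D)"
    unfolding n_east_def by (metis filter_append length_append)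
  then show ?thesis by simp
qed

lemma dyck_iff: "D \<in> dyck_paths m n \<longleftrightarrow> n_north D = n \<and> n_east D = m * n \<and> (\<forall>y<n. px D y \<le> m * y)"
proof
  assume "D \<in> dyck_paths m n"
  then have a: "n_north D = n" "n_east D = m * n"
    "\<And>i. i \<le> length D \<Longrightarrow> n_east (take i D) \<le> m * n_north (take i D)"
    unfolding dyck_paths_def by auto
  show "n_north D = n \<and> n_east D = m * n \<and> (\<forall>y<n. px D y \<le> m * y)"
  proof (intro conjI allI impI a)
    fix y assume "y < n"
    then obtain i where "i \<le> length D" "n_north (take i D) = y" "n_east (take i D) = px D y"
      using px_L1[of y D] a by auto
    then show "px D y \<le> m * y" using a(3)[of i] by simp
  qed
next
  assume a: "n_north D = n \<and> n_east D = m * n \<and> (\<forall>y<n. px D y \<le> m * y)"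
  have "n_east (take i D) \<le> m * n_north (take i D)" if "i \<le> length D" for i
  proof (cases "n_north (take i D) < n")
    case True
    then show ?thesis using px_L2[of i D] a by force
  next
    case False
    have "n_north (take i D) \<le> n_north D"
      unfolding n_north_def by (metis append_take_drop_id filter_append length_append le_add1)
    then have "n_north (take i D) = n" using False a by simp
    then show ?thesis using n_east_take_le[of i D] a by simp
  qed
  then show "D \<in> dyck_paths m n" using a unfolding dyck_paths_def by auto
qed

lemma n_north_east_length: "length D = n_north D + n_east D"
  unfolding n_north_def n_east_def by (induction D) auto

lemma px_inj: "n_north D1 = k \<Longrightarrow> n_north D2 = k \<Longrightarrow> n_east D1 = n_east D2 \<Longrightarrow>
  (\<forall>y<k. px D1 y = px D2 y) \<Longrightarrow> D1 = D2"
proof (induction D1 arbitrary: D2 k)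
  case Nil
  then have "length D2 = 0" using n_north_east_length[of D2] by simp
  then show ?case by simp
next
  case (Cons a D1)
  show ?case
  proof (cases D2)
    case Nil
    then show ?thesis using Cons.prems by (cases a) auto
  next
    case (Cons b D2')
    show ?thesis
    proof (cases a; cases b)
      assume "a" "b"
      have "\<forall>y<k - 1. px D1 y = px D2' y"
      proof (intro allI impI)
        fix y assume "y < k - 1"
        then show "px D1 y = px D2' y" using Cons.prems(4)[rule_format, of "Suc y"] \<open>a\<close> \<open>b\<close> \<open>D2 = _\<close> by simp
      qed
      then have "D1 = D2'" using Cons.IH[of "k - 1" D2'] Cons.prems \<open>a\<close> \<open>b\<close> \<open>D2 = _\<close> by simp
      then show ?thesis using \<open>a\<close> \<open>b\<close> \<open>D2 = _\<close> by simp
    next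
      assume "a" "\<not> b"
      then show ?thesis using Cons.prems(1,2) Cons.prems(4)[rule_format, of 0] \<open>D2 = _\<close> by simp
    next
      assume "\<not> a" "b"
      then show ?thesis using Cons.prems(1,2) Cons.prems(4)[rule_format, of 0] \<open>D2 = _\<close> by simp
    next
      assume "\<not> a" "\<not> b"
      then have "D1 = D2'" using Cons.IH[of k D2'] Cons.prems \<open>D2 = _\<close> by simp
      then show ?thesis using \<open>\<not> a\<close> \<open>\<not> b\<close> \<open>D2 = _\<close> by simp
    qed
  qed
qed

fun bld :: "nat \<Rightarrow> (nat \<Rightarrow> nat) \<Rightarrow> nat \<Rightarrow> bool list" where
  "bld 0 e tot = replicate tot False"
| "bld (Suc k) e tot = replicate (e 0) False @ True # bld k (\<lambda>y. e (Suc y) - e 0) (tot - e 0)"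

lemma px_rep: "px (replicate a False @ L) y = a + px L y"
  by (induction a) auto
lemma n_north_app[simp]: "n_north (A @ B) = n_north A + n_north B"
  by (simp add: n_north_def)
lemma n_east_app[simp]: "n_east (A @ B) = n_east A + n_east B"
  by (simp add: n_east_def)
lemma n_north_rep[simp]: "n_north (replicate a False) = 0"
  by (simp add: n_north_def)
lemma n_east_rep[simp]: "n_east (replicate a False) = a"
  by (simp add: n_east_def)

lemma mono_adj: "(\<forall>y. Suc y < k \<longrightarrow> e y \<le> e (Suc y)) \<Longrightarrow> a \<le> b \<Longrightarrow> b < k \<Longrightarrow> (e a :: nat) \<le> e b"
proof (induction b)
  case 0 then show ?case by simp
next
  case (Suc b)
  then show ?case by (cases "a = Suc b") (auto intro: le_trans)
qed

lemma bld_props: "(\<forall>y. Suc y < k \<longrightarrow> e y \<le> e (Suc y)) \<Longrightarrow> (\<forall>y<k. e y \<le> tot) \<Longrightarrow>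
  n_north (bld k e tot) = k \<and> n_east (bld k e tot) = tot \<and> (\<forall>y<k. px (bld k e tot) y = e y)"
proof (induction k arbitrary: e tot)
  case 0 then show ?case by simp
next
  case (Suc k)
  let ?e = "\<lambda>y. e (Suc y) - e 0"
  have m0: "e 0 \<le> e z" if "z < Suc k" for z using mono_adj[OF Suc.prems(1), of 0 z] that by simp
  have h1: "\<forall>y. Suc y < k \<longrightarrow> ?e y \<le> ?e (Suc y)" using Suc.prems(1) by auto
  have h2: "\<forall>y<k. ?e y \<le> tot - e 0" using Suc.prems(2) by (auto intro: diff_le_mono)
  note IH = Suc.IH[OF h1 h2]
  have "px (bld (Suc k) e tot) y = e y" if "y < Suc k" for y
  proof (cases y)
    case 0 then show ?thesis by (simp add: px_rep)
  next
    case (Suc y') then show ?thesis using IH that m0[of y] by (simp add: px_rep)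
  qed
  then show ?case using IH Suc.prems(2) by auto
qed

definition Eset :: "nat \<Rightarrow> nat \<Rightarrow> (nat \<Rightarrow> nat) set" where
  "Eset n m = {e. (\<forall>y. n \<le> y \<longrightarrow> e y = 0) \<and> (\<forall>y<n. e y \<le> m * y) \<and> (\<forall>y. Suc y < n \<longrightarrow> e y \<le> e (Suc y))}"

definition AEs :: "nat \<Rightarrow> nat \<Rightarrow> (nat \<Rightarrow> nat) \<Rightarrow> nat" where
  "AEs n m e = (\<Sum>y<n. m * y - e y)"

lemma dyck_bij: "bij_betw (\<lambda>D y. if y < n then px D y else 0) (dyck_paths m n) (Eset n m)"
proof -
  let ?P = "\<lambda>D y. if y < n then px D y else 0"
  have inj: "inj_on ?P (dyck_paths m n)"
  proof (rule inj_onI)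
    fix D1 D2 assume d: "D1 \<in> dyck_paths m n" "D2 \<in> dyck_paths m n" "?P D1 = ?P D2"
    have "\<forall>y<n. px D1 y = px D2 y"
    proof (intro allI impI)
      fix y assume "y < n" then show "px D1 y = px D2 y" using fun_cong[OF d(3), of y] by simp
    qed
    then show "D1 = D2" using px_inj[of D1 n D2] d(1,2) dyck_iff by auto
  qed
  have sub: "?P ` dyck_paths m n \<subseteq> Eset n m"
    using dyck_iff px_mono unfolding Eset_def by auto
  have sup: "Eset n m \<subseteq> ?P ` dyck_paths m n"
  proof
    fix e assume e: "e \<in> Eset n m"
    then have a: "\<forall>y. Suc y < n \<longrightarrow> e y \<le> e (Suc y)" "\<forall>y<n. e y \<le> m * n"
      unfolding Eset_def by (auto intro: le_trans[OF _ mult_le_mono2])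
    note b = bld_props[OF a]
    have c1: "bld n e (m * n) \<in> dyck_paths m n" using b e unfolding dyck_iff Eset_def by auto
    have c2: "?P (bld n e (m * n)) = e" using b e unfolding Eset_def by auto
    show "e \<in> ?P ` dyck_paths m n" using image_eqI[where x="bld n e (m * n)" and f="?P", OF sym[OF c2] c1] .
  qed
  show ?thesis using inj sub sup unfolding bij_betw_def by blast
qed

lemma area_AE: "dyck_area m n D = AEs n m (\<lambda>y. if y < n then px D y else 0)"
proof -
  have "{(a, y). y < n \<and> path_x D y \<le> a \<and> a + 1 \<le> m * y} =
        (\<lambda>(y, a). (a, y)) ` (SIGMA y:{..<n}. {px D y..<m * y})"
    by (auto simp: path_x_px image_iff)
  moreover have "card ((\<lambda>(y, a). (a, y)) ` (SIGMA y:{..<n}. {px D y..<m * y})) =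
      card (SIGMA y:{..<n}. {px D y..<m * y})"
    by (rule card_image) (auto simp: inj_on_def)
  moreover have "card (SIGMA y:{..<n}. {px D y..<m * y}) = (\<Sum>y<n. m * y - px D y)"
    by (simp add: card_SigmaI)
  ultimately show ?thesis unfolding dyck_area_def AEs_def by simp
qed

lemma RHS_eq: "(\<Sum>D \<in> dyck_paths m n. (q::'a::comm_semiring_1) ^ dyck_area m n D) = (\<Sum>e \<in> Eset n m. q ^ AEs n m e)"
proof -
  have "(\<Sum>e \<in> Eset n m. q ^ AEs n m e) = (\<Sum>D \<in> dyck_paths m n. q ^ AEs n m (\<lambda>y. if y < n then px D y else 0))"
    using sum.reindex_bij_betw[OF dyck_bij[of n m], of "\<lambda>e. q ^ AEs n m e"] by simp
  then show ?thesis by (simp add: area_AE)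
qed




definition Lab :: "nat \<Rightarrow> nat \<Rightarrow> (nat \<times> nat) set" where
  "Lab m j = {..<j} \<times> {1..m}"

definition val :: "(nat \<Rightarrow> real) \<Rightarrow> nat \<times> nat \<Rightarrow> real" where
  "val x p = x (fst p) + real (snd p)"

definition ev :: "nat \<Rightarrow> (nat \<Rightarrow> real) \<Rightarrow> nat \<Rightarrow> nat" where
  "ev m x j = card {p \<in> Lab m j. val x p < x j}"

definition rk :: "nat \<Rightarrow> (nat \<Rightarrow> real) \<Rightarrow> nat \<Rightarrow> nat \<times> nat \<Rightarrow> nat" where
  "rk m x j p = card {p' \<in> Lab m j. val x p' < val x p}"

definition gen :: "nat \<Rightarrow> nat \<Rightarrow> (nat \<Rightarrow> real) \<Rightarrow> bool" where
  "gen n m x \<longleftrightarrow> (\<forall>i j. i < j \<and> j < n \<longrightarrow> x i < x j) \<and>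
     (\<forall>i j l. i < j \<and> j < n \<and> 1 \<le> l \<and> l \<le> m \<longrightarrow> x j - x i \<noteq> real l)"

definition cmpP :: "(nat \<Rightarrow> nat \<Rightarrow> nat \<Rightarrow> bool) \<Rightarrow> nat \<times> nat \<Rightarrow> nat \<times> nat \<Rightarrow> bool" where
  "cmpP Q p' p = (case p' of (i', k') \<Rightarrow> case p of (i, k) \<Rightarrow>
     (if i' = i then k' < k else if i' < i then (k' \<le> k \<or> Q i' i (k' - k))
      else (k' < k \<and> \<not> Q i i' (k - k'))))"

lemma finite_Lab[simp]: "finite (Lab m j)" by (simp add: Lab_def)

lemma cmp_lemma:
  assumes g: "gen n m x" and p: "p \<in> Lab m j" "p' \<in> Lab m j" and j: "j \<le> n"
  shows "val x p' < val x p \<longleftrightarrow> cmpP (\<lambda>a b l. x a + real l < x b) p' p"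
proof -
  obtain i k where pk: "p = (i, k)" by (cases p)
  obtain i' k' where pk': "p' = (i', k')" by (cases p')
  have r: "i < n" "i' < n" "1 \<le> k" "k \<le> m" "1 \<le> k'" "k' \<le> m"
    using p j pk pk' by (auto simp: Lab_def)
  have inc: "\<And>a b. a < b \<Longrightarrow> b < n \<Longrightarrow> x a < x b" and ni: "\<And>a b l. a < b \<Longrightarrow> b < n \<Longrightarrow> 1 \<le> l \<Longrightarrow> l \<le> m \<Longrightarrow> x b - x a \<noteq> real l"
    using g unfolding gen_def by auto
  show ?thesis
  proof (cases "i' = i")
    case True then show ?thesis using pk pk' by (simp add: val_def cmpP_def)
  next
    case ne: False
    show ?thesis
    proof (cases "i' < i")
      case True
      have "x i' < x i" using inc[OF True r(1)] .
      show ?thesis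
      proof (cases "k' \<le> k")
        case True then show ?thesis using pk pk' ne \<open>i' < i\<close> \<open>x i' < x i\<close> by (simp add: val_def cmpP_def)
      next
        case False
        then have "real (k' - k) = real k' - real k" by simp
        then show ?thesis using pk pk' ne \<open>i' < i\<close> False by (simp add: val_def cmpP_def) linarith
      qed
    next
      case False
      then have lt: "i < i'" using ne by simp
      have "x i < x i'" using inc[OF lt r(2)] .
      show ?thesis
      proof (cases "k' < k")
        case True
        have h: "real (k - k') = real k - real k'" using True by simp
        have "x i' - x i \<noteq> real (k - k')" using ni[OF lt r(2), of "k - k'"] True r by simp
        then show ?thesis using pk pk' ne lt True h by (simp add: val_def cmpP_def) linarith
      next
        case False then show ?thesis using pk pk' ne lt \<open>x i < x i'\<close> by (simp add: val_def cmpP_def)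
      qed
    qed
  qed
qed

lemma rank_lemma:
  assumes g: "gen n m x" and p: "p \<in> Lab m j" and j: "j < n"
  shows "val x p < x j \<longleftrightarrow> rk m x j p < ev m x j"
proof
  assume a: "val x p < x j"
  have "{p' \<in> Lab m j. val x p' < val x p} \<subset> {p' \<in> Lab m j. val x p' < x j}"
    using a p by auto
  then show "rk m x j p < ev m x j" unfolding rk_def ev_def by (intro psubset_card_mono) auto
next
  assume a: "rk m x j p < ev m x j"
  show "val x p < x j"
  proof (rule ccontr)
    assume "\<not> val x p < x j"
    moreover obtain i k where pk: "p = (i, k)" by (cases p)
    moreover have "x j - x i \<noteq> real k" using g p j pk unfolding gen_def Lab_def by auto
    ultimately have "x j < val x p" by (auto simp: val_def)
    then have "{p' \<in> Lab m j. val x p' < x j} \<subseteq> {p' \<in> Lab m j. val x p' < val x p}" by auto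
    then have "ev m x j \<le> rk m x j p" unfolding rk_def ev_def by (intro card_mono) auto
    with a show False by simp
  qed
qed

lemma inj_lemma:
  assumes gx: "gen n m x" and gy: "gen n m y" and e: "\<forall>j<n. ev m x j = ev m y j"
  shows "\<forall>a b l. a < b \<and> b < n \<and> 1 \<le> l \<and> l \<le> m \<longrightarrow> (x a + real l < x b \<longleftrightarrow> y a + real l < y b)"
proof -
  have "j \<le> n \<Longrightarrow> \<forall>a b l. a < b \<and> b < j \<and> 1 \<le> l \<and> l \<le> m \<longrightarrow> (x a + real l < x b \<longleftrightarrow> y a + real l < y b)" for j
  proof (induction j)
    case 0 then show ?case by simp
  next
    case (Suc j)
    then have j: "j < n" by simp
    note IH = Suc.IH[OF less_imp_le[OF j]]
    have cm: "cmpP (\<lambda>a b l. x a + real l < x b) p' p = cmpP (\<lambda>a b l. y a + real l < y b) p' p"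
      if "p \<in> Lab m j" "p' \<in> Lab m j" for p p'
    proof -
      obtain i k where pk: "p = (i, k)" by (cases p)
      obtain i' k' where pk': "p' = (i', k')" by (cases p')
      have r: "i < j" "i' < j" "1 \<le> k" "k \<le> m" "1 \<le> k'" "k' \<le> m"
        using that pk pk' by (auto simp: Lab_def)
      have Q1: "(x i' + real (k'-k) < x i \<longleftrightarrow> y i' + real (k'-k) < y i)" if "i' < i" "\<not> k' \<le> k"
      proof -
        have "1 \<le> k' - k" "k' - k \<le> m" using that r by auto
        then show ?thesis using IH[rule_format, of i' i "k'-k"] r that by (simp del: of_nat_diff)
      qed
      have Q2: "(x i + real (k-k') < x i' \<longleftrightarrow> y i + real (k-k') < y i')" if "i < i'" "k' < k"
      proof -
        have "1 \<le> k - k'" "k - k' \<le> m" "i' < j" using that r by auto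
        then show ?thesis using IH[rule_format, of i i' "k-k'"] r that by (simp del: of_nat_diff)
      qed
      show ?thesis unfolding pk pk' cmpP_def using Q1 Q2 by (auto simp del: of_nat_diff)
    qed
    have rk: "rk m x j p = rk m y j p" if "p \<in> Lab m j" for p
    proof -
      have "{p' \<in> Lab m j. val x p' < val x p} = {p' \<in> Lab m j. val y p' < val y p}"
        using cmp_lemma[OF gx that _ less_imp_le[OF j]] cmp_lemma[OF gy that _ less_imp_le[OF j]] cm[OF that]
        by blast
      then show ?thesis unfolding rk_def by simp
    qed
    show ?case
    proof (intro allI impI)
      fix a b l assume h: "a < b \<and> b < Suc j \<and> 1 \<le> l \<and> l \<le> m"
      show "(x a + real l < x b \<longleftrightarrow> y a + real l < y b)"
      proof (cases "b < j")
        case True then show ?thesis using IH h by auto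
      next
        case False
        then have b: "b = j" using h by simp
        have pl: "(a, l) \<in> Lab m j" using h b by (auto simp: Lab_def)
        show ?thesis using rank_lemma[OF gx pl j] rank_lemma[OF gy pl j] rk[OF pl] e j b
          by (simp add: val_def)
      qed
    qed
  qed
  then show ?thesis by blast
qed




lemma S_ne: "x \<in> shi_complement n m \<Longrightarrow> i < j \<Longrightarrow> j < n \<Longrightarrow> - int m < k \<Longrightarrow> k \<le> int m \<Longrightarrow> x j - x i \<noteq> of_int k"
  unfolding shi_complement_def shi_hyps_def by auto

lemma S_V: "x \<in> shi_complement n m \<Longrightarrow> x \<in> V_A n"
  unfolding shi_complement_def by auto

lemma gen_of: "x \<in> shi_complement n m \<Longrightarrow> x \<in> fund_chamber n \<Longrightarrow> gen n m x"
  unfolding gen_def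
proof (intro conjI allI impI)
  fix i j assume "x \<in> fund_chamber n" "i < j \<and> j < n"
  then show "x i < x j" unfolding fund_chamber_def by auto
next
  fix i j l assume a: "x \<in> shi_complement n m" "i < j \<and> j < n \<and> 1 \<le> l \<and> l \<le> m"
  then have "x j - x i \<noteq> of_int (int l)" by (intro S_ne) auto
  then show "x j - x i \<noteq> real l" by simp
qed

lemma sign_const:
  fixes C :: "(nat \<Rightarrow> real) set"
  assumes C: "connected C" "x \<in> C" "y \<in> C" and ne: "\<forall>z\<in>C. z j - z i \<noteq> c"
  shows "x j - x i < c \<longleftrightarrow> y j - y i < c"
proof -
  let ?f = "\<lambda>z::nat \<Rightarrow> real. z j - z i"
  have cont: "continuous_on C ?f"
    by (rule continuous_on_subset[of UNIV]) (auto intro!: continuous_intros continuous_on_product_coordinates)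
  have con: "connected (?f ` C)" by (rule connected_continuous_image[OF cont C(1)])
  have "c \<notin> ?f ` C" using ne by auto
  moreover have "?f x \<in> ?f ` C" "?f y \<in> ?f ` C" using C by auto
  moreover have "y j - y i \<noteq> c" "x j - x i \<noteq> c" using ne C by auto
  moreover have "\<And>a b z. a \<in> ?f ` C \<Longrightarrow> b \<in> ?f ` C \<Longrightarrow> a \<le> z \<Longrightarrow> z \<le> b \<Longrightarrow> z \<in> ?f ` C"
    using con unfolding connected_iff_interval by blast
  ultimately show ?thesis by (meson linorder_neqE_linordered_idom order_less_imp_le)
qed

abbreviation CC :: "nat \<Rightarrow> nat \<Rightarrow> (nat \<Rightarrow> real) \<Rightarrow> (nat \<Rightarrow> real) set" where
  "CC n m x \<equiv> connected_component_set (shi_complement n m) x"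

lemma comp_same:
  assumes "x \<in> shi_complement n m" "y \<in> CC n m x" "i < j" "j < n" "- int m < k" "k \<le> int m"
  shows "x j - x i < of_int k \<longleftrightarrow> y j - y i < of_int k"
proof (rule sign_const)
  show "connected (CC n m x)" by simp
  show "x \<in> CC n m x" using assms by simp
  show "y \<in> CC n m x" by fact
  show "\<forall>z\<in>CC n m x. z j - z i \<noteq> of_int k"
    using connected_component_subset S_ne assms by blast
qed

lemma comp_FC: "1 \<le> m \<Longrightarrow> x \<in> shi_complement n m \<Longrightarrow> x \<in> fund_chamber n \<Longrightarrow> CC n m x \<subseteq> fund_chamber n"
proof
  fix y assume m1: "1 \<le> m" and a: "x \<in> shi_complement n m" "x \<in> fund_chamber n" "y \<in> CC n m x"
  have "y \<in> V_A n" using a(3) connected_component_subset S_V by blast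
  moreover have "0 < y j - y i" if "i < j" "j < n" for i j
  proof -
    have "\<not> (x j - x i < of_int 0)" using a(2) that unfolding fund_chamber_def by force
    then have "\<not> (y j - y i < of_int 0)" using comp_same[OF a(1) a(3) that, of 0] m1 by simp
    moreover have "y j - y i \<noteq> of_int 0" using a(3) connected_component_subset S_ne[of y n m i j 0] that m1 by force
    ultimately show ?thesis by simp
  qed
  ultimately show "y \<in> fund_chamber n" unfolding fund_chamber_def by auto
qed

lemma conv_lt: "(a::real) < c \<Longrightarrow> b < c \<Longrightarrow> 0 \<le> t \<Longrightarrow> t \<le> 1 \<Longrightarrow> (1 - t) * a + t * b < c"
proof -
  assume h: "a < c" "b < c" "0 \<le> t" "t \<le> 1"
  show ?thesis
  proof (cases "t = 1")
    case True then show ?thesis using h by simp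
  next
    case False
    then have "(1 - t) * a < (1 - t) * c" using h by (intro mult_strict_left_mono) auto
    moreover have "t * b \<le> t * c" using h by (intro mult_left_mono) auto
    ultimately show ?thesis by (simp add: algebra_simps)
  qed
qed

lemma conv_gt: "c < (a::real) \<Longrightarrow> c < b \<Longrightarrow> 0 \<le> t \<Longrightarrow> t \<le> 1 \<Longrightarrow> c < (1 - t) * a + t * b"
  using conv_lt[of "-a" "-c" "-b" t] by (simp add: algebra_simps)

lemma same_comp:
  assumes x: "x \<in> shi_complement n m" "x \<in> fund_chamber n"
      and y: "y \<in> shi_complement n m" "y \<in> fund_chamber n"
      and P: "\<forall>a b l. a < b \<and> b < n \<and> 1 \<le> l \<and> l \<le> m \<longrightarrow> (x a + real l < x b \<longleftrightarrow> y a + real l < y b)"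
  shows "y \<in> CC n m x"
proof -
  let ?g = "\<lambda>t::real. \<lambda>i. (1 - t) * x i + t * y i"
  have cont: "continuous_on {0..1} ?g" by (intro continuous_intros)
  have con: "connected (?g ` {0..1})" by (rule connected_continuous_image[OF cont]) simp
  have sub: "?g ` {0..1} \<subseteq> shi_complement n m"
  proof
    fix z assume "z \<in> ?g ` {0..1}"
    then obtain t where t: "0 \<le> t" "t \<le> 1" "z = ?g t" by auto
    have xv: "x \<in> V_A n" and yv: "y \<in> V_A n" using x y S_V by auto
    have "z \<in> V_A n"
    proof -
      have "(\<Sum>i<n. z i) = (1 - t) * (\<Sum>i<n. x i) + t * (\<Sum>i<n. y i)"
        by (simp add: t(3) sum.distrib sum_distrib_left)
      then show ?thesis using xv yv t(3) unfolding V_A_def by auto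
    qed
    moreover have "z j - z i \<noteq> of_int k" if h: "(i, j, k) \<in> shi_hyps n m" for i j k
    proof -
      have h': "i < j" "j < n" "- int m < k" "k \<le> int m" using h unfolding shi_hyps_def by auto
      have eq: "z j - z i = (1 - t) * (x j - x i) + t * (y j - y i)" using t(3) by (simp add: algebra_simps)
      have px: "0 < x j - x i" "0 < y j - y i" using x(2) y(2) h' unfolding fund_chamber_def by auto
      show ?thesis
      proof (cases "k \<le> 0")
        case True
        have "0 < z j - z i" unfolding eq using conv_gt[OF px, of t] t by simp
        then show ?thesis using True by (smt (verit) of_int_le_0_iff)
      next
        case False
        define l where "l = nat k"
        have l: "k = int l" "1 \<le> l" "l \<le> m" using h'(4) False unfolding l_def by auto
        have nx: "x j - x i \<noteq> real l" and ny: "y j - y i \<noteq> real l"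
          using S_ne[OF x(1) h'] S_ne[OF y(1) h'] l by auto
        have "x i + real l < x j \<longleftrightarrow> y i + real l < y j" using P h' l by auto
        then have iff: "x j - x i < real l \<longleftrightarrow> y j - y i < real l" using nx ny by auto
        show ?thesis
        proof (cases "x j - x i < real l")
          case True
          then have "z j - z i < real l" unfolding eq using conv_lt[OF True _ t(1,2)] iff by auto
          then show ?thesis using l by simp
        next
          case False
          then have a1: "real l < x j - x i" "real l < y j - y i" using nx ny iff by auto
          have "real l < z j - z i" unfolding eq using conv_gt[OF a1 t(1,2)] .
          then show ?thesis using l by simp
        qed
      qed
    qed
    ultimately show "z \<in> shi_complement n m" unfolding shi_complement_def by auto
  qed
  have "x \<in> ?g ` {0..1}" by (rule image_eqI[where x=0]) auto
  moreover have "y \<in> ?g ` {0..1}" by (rule image_eqI[where x=1]) auto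
  ultimately show ?thesis using connected_component_maximal[OF _ con sub] by blast
qed




definition ehat :: "nat \<Rightarrow> nat \<Rightarrow> (nat \<Rightarrow> real) \<Rightarrow> nat \<Rightarrow> nat" where
  "ehat n m x = (\<lambda>j. if j < n then ev m x j else 0)"

definition GG :: "nat \<Rightarrow> nat \<Rightarrow> (nat \<Rightarrow> real) set" where
  "GG n m = shi_complement n m \<inter> fund_chamber n"

definition PosReg :: "nat \<Rightarrow> nat \<Rightarrow> (nat \<Rightarrow> real) set set" where
  "PosReg n m = {R \<in> shi_regions n m. R \<subseteq> fund_chamber n}"

definition Phi :: "nat \<Rightarrow> nat \<Rightarrow> (nat \<Rightarrow> real) set \<Rightarrow> nat \<Rightarrow> nat" where
  "Phi n m R = ehat n m (SOME x. x \<in> R)"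

lemma PosReg_eq: "1 \<le> m \<Longrightarrow> PosReg n m = CC n m ` GG n m"
proof
  show "PosReg n m \<subseteq> CC n m ` GG n m"
  proof
    fix R assume "R \<in> PosReg n m"
    then obtain x where x: "x \<in> shi_complement n m" "R = CC n m x" "R \<subseteq> fund_chamber n"
      unfolding PosReg_def shi_regions_def by auto
    then have "x \<in> fund_chamber n" by auto
    then show "R \<in> CC n m ` GG n m" using x unfolding GG_def by auto
  qed
next
  assume m: "1 \<le> m"
  show "CC n m ` GG n m \<subseteq> PosReg n m"
    using comp_FC[OF m] unfolding PosReg_def GG_def shi_regions_def by auto
qed

lemma ev_P:
  assumes "\<forall>a b l. a < b \<and> b < n \<and> 1 \<le> l \<and> l \<le> m \<longrightarrow> (x a + real l < x b \<longleftrightarrow> y a + real l < y b)" "j < n"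
  shows "ev m x j = ev m y j"
proof -
  have "{p \<in> Lab m j. val x p < x j} = {p \<in> Lab m j. val y p < y j}"
    using assms unfolding Lab_def val_def by fastforce
  then show ?thesis unfolding ev_def by simp
qed

lemma P_CC:
  assumes m: "1 \<le> m" and x: "x \<in> GG n m" and y: "y \<in> CC n m x"
  shows "\<forall>a b l. a < b \<and> b < n \<and> 1 \<le> l \<and> l \<le> m \<longrightarrow> (x a + real l < x b \<longleftrightarrow> y a + real l < y b)"
proof (intro allI impI)
  fix a b l assume h: "a < b \<and> b < n \<and> 1 \<le> l \<and> l \<le> m"
  have xs: "x \<in> shi_complement n m" using x unfolding GG_def by auto
  have ys: "y \<in> shi_complement n m" using y connected_component_subset by blast
  have "x b - x a < of_int (int l) \<longleftrightarrow> y b - y a < of_int (int l)"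
    using comp_same[OF xs y, of a b "int l"] h by auto
  moreover have "x b - x a \<noteq> of_int (int l)" "y b - y a \<noteq> of_int (int l)"
    using S_ne[OF xs, of a b "int l"] S_ne[OF ys, of a b "int l"] h by auto
  ultimately show "x a + real l < x b \<longleftrightarrow> y a + real l < y b" by auto
qed

lemma CC_GG: "1 \<le> m \<Longrightarrow> x \<in> GG n m \<Longrightarrow> y \<in> CC n m x \<Longrightarrow> y \<in> GG n m"
  using comp_FC connected_component_subset unfolding GG_def by blast

lemma Phi_CC:
  assumes m: "1 \<le> m" and x: "x \<in> GG n m"
  shows "Phi n m (CC n m x) = ehat n m x"
proof -
  have "x \<in> CC n m x" using x unfolding GG_def by auto
  then have y: "(SOME y. y \<in> CC n m x) \<in> CC n m x" using someI[of "\<lambda>y. y \<in> CC n m x" x] by blast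
  show ?thesis unfolding Phi_def ehat_def using ev_P[OF P_CC[OF m x y]] by auto
qed

lemma card_Lab: "card (Lab m j) = j * m" by (simp add: Lab_def card_cartesian_product)

lemma ev_le: "ev m x j \<le> m * j"
proof -
  have "ev m x j \<le> card (Lab m j)" unfolding ev_def by (intro card_mono) auto
  then show ?thesis by (simp add: card_Lab mult.commute)
qed

lemma ehat_Eset:
  assumes x: "x \<in> GG n m"
  shows "ehat n m x \<in> Eset n m"
proof -
  have inc: "\<And>a b. a < b \<Longrightarrow> b < n \<Longrightarrow> x a < x b" using x unfolding GG_def fund_chamber_def by auto
  have "ev m x j \<le> ev m x (Suc j)" if "Suc j < n" for j
  proof -
    have "{p \<in> Lab m j. val x p < x j} \<subseteq> {p \<in> Lab m (Suc j). val x p < x (Suc j)}"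
      using inc[of j "Suc j"] that unfolding Lab_def by auto
    then show ?thesis unfolding ev_def by (intro card_mono) auto
  qed
  then show ?thesis using ev_le unfolding Eset_def ehat_def by auto
qed

lemma Phi_inj:
  assumes m: "1 \<le> m" shows "inj_on (Phi n m) (PosReg n m)"
proof (rule inj_onI)
  fix R1 R2 assume R: "R1 \<in> PosReg n m" "R2 \<in> PosReg n m" "Phi n m R1 = Phi n m R2"
  obtain x where x: "x \<in> GG n m" "R1 = CC n m x" using R(1) PosReg_eq[OF m] by auto
  obtain y where y: "y \<in> GG n m" "R2 = CC n m y" using R(2) PosReg_eq[OF m] by auto
  have "ehat n m x = ehat n m y" using R(3) Phi_CC[OF m x(1)] Phi_CC[OF m y(1)] x y by simp
  then have e: "\<forall>j<n. ev m x j = ev m y j" unfolding ehat_def by (metis (full_types))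
  have gx: "gen n m x" and gy: "gen n m y" using x y gen_of unfolding GG_def by auto
  have "y \<in> CC n m x" using same_comp[of x n m y] x y inj_lemma[OF gx gy e] unfolding GG_def by auto
  then show "R1 = R2" using x y connected_component_eq by metis
qed


lemma sum_real_lt: "(\<Sum>i<n. real i) = real n * (real n - 1) / 2"
  by (induction n) (auto simp: algebra_simps)

lemma R0_ne: assumes n: "1 \<le> n" shows "\<exists>z. z \<in> R0_A n"
proof -
  define z where "z = (\<lambda>i. if i < n then (real i - (real n - 1) / 2) / real n else 0)"
  have "(\<Sum>i<n. z i) = (\<Sum>i<n. real i / real n - (real n - 1) / 2 / real n)"
    unfolding z_def by (intro sum.cong) (auto simp: diff_divide_distrib)
  also have "\<dots> = (\<Sum>i<n. real i) / real n - real n * ((real n - 1) / 2 / real n)"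
    by (simp add: sum_subtractf sum_divide_distrib)
  also have "\<dots> = 0" using n by (simp add: sum_real_lt)
  finally have s: "(\<Sum>i<n. z i) = 0" .
  have "z \<in> R0_A n"
    unfolding R0_A_def V_A_def
  proof (intro CollectI conjI allI impI s)
    fix i assume "n \<le> i" then show "z i = 0" unfolding z_def by simp
  next
    fix i j assume h: "i < j \<and> j < n"
    have eq: "z j - z i = (real j - real i) / real n" using h unfolding z_def by (simp add: diff_divide_distrib)
    show "0 < z j - z i" unfolding eq using h by simp
    show "z j - z i < 1" unfolding eq using h by simp
  qed
  then show ?thesis by blast
qed

lemma sep_set:
  assumes m: "1 \<le> m" and n: "1 \<le> n" and x: "x \<in> GG n m"
  shows "{h \<in> shi_hyps n m. separates h (CC n m x) (R0_A n)} =
     (\<lambda>(j, (i, l)). (i, j, int l)) ` (SIGMA j:{..<n}. {p \<in> Lab m j. val x p < x j})"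
proof -
  obtain z where z: "z \<in> R0_A n" using R0_ne[OF n] by blast
  have xs: "x \<in> shi_complement n m" and xf: "x \<in> fund_chamber n" using x unfolding GG_def by auto
  have xcc: "x \<in> CC n m x" using xs by simp
  have key: "separates (i, j, k) (CC n m x) (R0_A n) \<longleftrightarrow> 1 \<le> k \<and> x i + of_int k < x j"
    if h: "i < j" "j < n" "- int m < k" "k \<le> int m" for i j k
  proof
    assume s: "separates (i, j, k) (CC n m x) (R0_A n)"
    then obtain y w where yw: "y \<in> CC n m x" "w \<in> R0_A n"
      "(y j - y i < of_int k \<and> of_int k < w j - w i) \<or> (w j - w i < of_int k \<and> of_int k < y j - y i)"
      unfolding separates_def by auto
    have w: "0 < w j - w i" "w j - w i < 1" using yw(2) h unfolding R0_A_def by auto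
    have yg: "y \<in> GG n m" using CC_GG[OF m x yw(1)] .
    have y0: "0 < y j - y i" using yg h unfolding GG_def fund_chamber_def by auto
    have k1: "1 \<le> k" "of_int k < y j - y i"
    proof -
      have "\<not> (y j - y i < of_int k \<and> of_int k < w j - w i)"
      proof
        assume a: "y j - y i < of_int k \<and> of_int k < w j - w i"
        then have "of_int k < (1::real)" using w by linarith
        then have "k \<le> 0" by simp
        then have "of_int k \<le> (0::real)" by simp
        then show False using a y0 by linarith
      qed
      then have b: "w j - w i < of_int k" "of_int k < y j - y i" using yw(3) by auto
      then show "of_int k < y j - y i" by simp
      have "(0::real) < of_int k" using b w by linarith
      then show "1 \<le> k" by simp
    qed
    have "\<not> (x j - x i < of_int k)" using comp_same[OF xs yw(1) h] k1 by auto
    moreover have "x j - x i \<noteq> of_int k" using S_ne[OF xs h] .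
    ultimately show "1 \<le> k \<and> x i + of_int k < x j" using k1 by auto
  next
    assume a: "1 \<le> k \<and> x i + of_int k < x j"
    have "w j - w i < 1" if "w \<in> R0_A n" for w using that h unfolding R0_A_def by auto
    moreover have "(1::real) \<le> of_int k" using a by simp
    ultimately have "z j - z i < of_int k" using z by force
    then have "z j - z i < of_int k \<and> of_int k < x j - x i" using a by auto
    then show "separates (i, j, k) (CC n m x) (R0_A n)"
      unfolding separates_def using xcc z by blast
  qed
  show ?thesis
  proof (rule set_eqI, rule iffI)
    fix h assume hh: "h \<in> {h \<in> shi_hyps n m. separates h (CC n m x) (R0_A n)}"
    obtain i j k where ijk: "h = (i, j, k)" by (cases h)
    have r: "i < j" "j < n" "- int m < k" "k \<le> int m" using hh ijk unfolding shi_hyps_def by auto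
    have kk: "1 \<le> k" "x i + of_int k < x j" using key[OF r] hh ijk by auto
    define l where "l = nat k"
    have l: "k = int l" "1 \<le> l" "l \<le> m" using kk r unfolding l_def by auto
    have "(j, (i, l)) \<in> (SIGMA j:{..<n}. {p \<in> Lab m j. val x p < x j})"
      using r l kk unfolding Lab_def val_def by auto
    then show "h \<in> (\<lambda>(j, (i, l)). (i, j, int l)) ` (SIGMA j:{..<n}. {p \<in> Lab m j. val x p < x j})"
      using ijk l by force
  next
    fix h assume "h \<in> (\<lambda>(j, (i, l)). (i, j, int l)) ` (SIGMA j:{..<n}. {p \<in> Lab m j. val x p < x j})"
    then obtain j i l where h: "h = (i, j, int l)" "j < n" "i < j" "1 \<le> l" "l \<le> m" "x i + real l < x j"
      unfolding Lab_def val_def by auto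
    have r: "i < j" "j < n" "- int m < int l" "int l \<le> int m" using h by auto
    show "h \<in> {h \<in> shi_hyps n m. separates h (CC n m x) (R0_A n)}"
      using key[OF r] h unfolding shi_hyps_def by auto
  qed
qed

lemma height_eq:
  assumes m: "1 \<le> m" and n: "1 \<le> n" and x: "x \<in> GG n m"
  shows "shi_height n m (CC n m x) = (\<Sum>j<n. ev m x j)"
proof -
  have "shi_height n m (CC n m x) = card (SIGMA j:{..<n}. {p \<in> Lab m j. val x p < x j})"
    unfolding shi_height_def sep_set[OF m n x]
    by (rule card_image) (auto simp: inj_on_def)
  also have "\<dots> = (\<Sum>j<n. ev m x j)" by (simp add: card_SigmaI ev_def)
  finally show ?thesis .
qed

lemma num_pos: "num_pos_roots_A n = (\<Sum>j<n. j)"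
proof -
  have "{(i, j). i < j \<and> j < n} = (\<lambda>(j, i). (i, j)) ` (SIGMA j:{..<n}. {..<j})" by auto
  moreover have "card ((\<lambda>(j, i). (i, j)) ` (SIGMA j:{..<n}. {..<j})) = card (SIGMA j:{..<n}. {..<j})"
    by (rule card_image) (auto simp: inj_on_def)
  ultimately have "num_pos_roots_A n = card (SIGMA j:{..<n}. {..<j})"
    unfolding num_pos_roots_A_def by simp
  then show ?thesis by (simp add: card_SigmaI)
qed

lemma coh_eq:
  assumes m: "1 \<le> m" and n: "1 \<le> n" and x: "x \<in> GG n m"
  shows "shi_coh n m (CC n m x) = AEs n m (ehat n m x)"
proof -
  have "shi_coh n m (CC n m x) = (\<Sum>j<n. m * j) - (\<Sum>j<n. ev m x j)"
    unfolding shi_coh_def height_eq[OF m n x] num_pos by (simp add: sum_distrib_left)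
  also have "\<dots> = (\<Sum>j<n. m * j - ev m x j)"
    by (rule sum_subtractf_nat[symmetric]) (simp add: ev_le)
  finally show ?thesis unfolding AEs_def ehat_def by simp
qed




lemma avoid:
  fixes a b :: real
  assumes ab: "a < b" and F: "finite F"
  shows "\<exists>s. a < s \<and> s < b \<and> (\<forall>f\<in>F. \<forall>z::int. s - f \<noteq> of_int z)"
proof -
  let ?bad = "(\<lambda>(f, z::int). f + of_int z) ` (F \<times> UNIV)"
  have "countable (F \<times> (UNIV :: int set))"
    using F by (intro countable_SIGMA) (auto intro: countable_finite)
  then have cb: "countable ?bad" by (rule countable_image)
  have "\<not> {a<..<b} \<subseteq> ?bad"
  proof
    assume "{a<..<b} \<subseteq> ?bad"
    then have "countable {a<..<b}" using cb countable_subset by blast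
    then show False using uncountable_open_interval ab by blast
  qed
  then obtain s where s: "s \<in> {a<..<b}" "s \<notin> ?bad" by blast
  have "\<forall>f\<in>F. \<forall>z::int. s - f \<noteq> of_int z"
  proof (intro ballI allI notI)
    fix f z assume "f \<in> F" "s - f = (of_int z :: real)"
    then have "s \<in> ?bad" by (intro image_eqI[where x="(f, z)"]) auto
    then show False using s by simp
  qed
  then show ?thesis using s by auto
qed

lemma pick:
  fixes J :: "real set" and a :: real
  assumes J: "finite J" and aJ: "a \<notin> J" and v: "card {w \<in> J. w < a} \<le> v" "v \<le> card J" and F: "finite F"
  shows "\<exists>s. a < s \<and> card {w \<in> J. w < s} = v \<and> (\<forall>f\<in>F. \<forall>z::int. s - f \<noteq> of_int z)"
proof (cases "v = card J")
  case True
  define M where "M = Max (insert a J)"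
  have aM: "a \<le> M" and JM: "\<And>w. w \<in> J \<Longrightarrow> w \<le> M" unfolding M_def using J by auto
  obtain s where s: "M < s" "s < M + 1" "\<forall>f\<in>F. \<forall>z::int. s - f \<noteq> of_int z"
    using avoid[of M "M + 1" F] F by auto
  have "{w \<in> J. w < s} = J" using JM s by force
  then show ?thesis using s aM True by (intro exI[of _ s]) auto
next
  case False
  then have vl: "v < card J" using v by simp
  define r where "r = (\<lambda>w. card {w' \<in> J. w' < w})"
  have rmono: "r w1 < r w2" if "w1 \<in> J" "w1 < w2" for w1 w2
  proof -
    have "{w' \<in> J. w' < w1} \<subset> {w' \<in> J. w' < w2}" using that by auto
    then show ?thesis unfolding r_def using J by (intro psubset_card_mono) auto
  qed
  have inj: "inj_on r J"
  proof (rule inj_onI)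
    fix w1 w2 assume "w1 \<in> J" "w2 \<in> J" "r w1 = r w2"
    then show "w1 = w2" using rmono by (metis less_irrefl linorder_neqE_linordered_idom)
  qed
  have sub: "r ` J \<subseteq> {..<card J}"
  proof
    fix u assume "u \<in> r ` J"
    then obtain w where w: "w \<in> J" "u = r w" by auto
    have "{w' \<in> J. w' < w} \<subset> J" using w by auto
    then show "u \<in> {..<card J}" unfolding w r_def using J by (simp add: psubset_card_mono)
  qed
  have "r ` J = {..<card J}"
    by (rule card_subset_eq) (use sub inj card_image in auto)
  then obtain p where p: "p \<in> J" "r p = v" using vl by (metis imageE lessThan_iff)
  have ap: "a < p"
  proof (rule ccontr)
    assume "\<not> a < p"
    then have "p < a" using aJ p by (metis linorder_neqE_linordered_idom)
    then have "{w' \<in> J. w' < p} \<subset> {w' \<in> J. w' < a}" using p by auto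
    then have "r p < card {w' \<in> J. w' < a}" unfolding r_def using J by (intro psubset_card_mono) auto
    then show False using p v by simp
  qed
  define L where "L = Max (insert a {w \<in> J. w < p})"
  have Lp: "L < p" unfolding L_def using J ap by auto
  have aL: "a \<le> L" and wL: "\<And>w. w \<in> J \<Longrightarrow> w < p \<Longrightarrow> w \<le> L" unfolding L_def using J by auto
  obtain s where s: "L < s" "s < p" "\<forall>f\<in>F. \<forall>z::int. s - f \<noteq> of_int z"
    using avoid[OF Lp F] by auto
  have "{w \<in> J. w < s} = {w \<in> J. w < p}" using wL s by force
  then have "card {w \<in> J. w < s} = v" using p unfolding r_def by simp
  then show ?thesis using s aL by (intro exI[of _ s]) auto
qed

lemma constr_t:
  assumes e: "e \<in> Eset n m"
  shows "k \<le> n \<Longrightarrow> \<exists>t. (\<forall>i j. i < j \<and> j < k \<longrightarrow> t i < t j) \<and>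
            (\<forall>i j (z::int). i < j \<and> j < k \<longrightarrow> t j - t i \<noteq> of_int z) \<and> (\<forall>j<k. ev m t j = e j)"
proof (induction k)
  case 0 then show ?case by simp
next
  case (Suc k)
  have ee: "\<forall>y<n. e y \<le> m * y" "\<forall>y. Suc y < n \<longrightarrow> e y \<le> e (Suc y)" using e unfolding Eset_def by auto
  show ?case
  proof (cases k)
    case 0
    have "ev m (\<lambda>_. 0) 0 = e 0" using ee Suc.prems unfolding ev_def Lab_def by auto
    then show ?thesis using 0 by (intro exI[of _ "\<lambda>_. 0"]) auto
  next
    case (Suc k1)
    then have k1: "k = Suc k1" .
    obtain t where t: "\<forall>i j. i < j \<and> j < k \<longrightarrow> t i < t j"
      "\<forall>i j (z::int). i < j \<and> j < k \<longrightarrow> t j - t i \<noteq> of_int z" "\<forall>j<k. ev m t j = e j"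
      using Suc.IH Suc.prems by auto
    define J where "J = val t ` Lab m k"
    have fJ: "finite J" unfolding J_def by simp
    have aJ: "t k1 \<notin> J"
    proof
      assume "t k1 \<in> J"
      then obtain i l where il: "i < k" "1 \<le> l" "l \<le> m" "t k1 = t i + real l"
        unfolding J_def Lab_def val_def by auto
      show False
      proof (cases "i = k1")
        case True then show False using il by simp
      next
        case False
        then have "i < k1" using il k1 by simp
        then have "t k1 - t i \<noteq> of_int (int l)" using t(2)[rule_format, of i k1 "int l"] k1 by simp
        then show False using il by simp
      qed
    qed
    have injv: "inj_on (val t) (Lab m k)"
    proof (rule inj_onI)
      fix p p' assume pp: "p \<in> Lab m k" "p' \<in> Lab m k" "val t p = val t p'"
      obtain i l where p: "p = (i, l)" by (cases p)
      obtain i' l' where p': "p' = (i', l')" by (cases p')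
      have r: "i < k" "i' < k" using pp p p' unfolding Lab_def by auto
      have eq: "t i + real l = t i' + real l'" using pp(3) p p' unfolding val_def by simp
      have "i = i'"
      proof (rule ccontr)
        assume "i \<noteq> i'"
        then consider "i < i'" | "i' < i" by linarith
        then show False
        proof cases
          case 1
          then have "t i' - t i \<noteq> of_int (int l - int l')" using t(2) r by blast
          then show False using eq by simp
        next
          case 2
          then have "t i - t i' \<noteq> of_int (int l' - int l)" using t(2) r by blast
          then show False using eq by simp
        qed
      qed
      then show "p = p'" using eq p p' by simp
    qed
    have cnt: "card {w \<in> J. w < s} = card {p \<in> Lab m k. val t p < s}" for s
    proof -
      have "{w \<in> J. w < s} = val t ` {p \<in> Lab m k. val t p < s}" unfolding J_def by auto
      moreover have "inj_on (val t) {p \<in> Lab m k. val t p < s}" using injv by (rule inj_on_subset) auto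
      ultimately show ?thesis by (simp add: card_image)
    qed
    have "{p \<in> Lab m k. val t p < t k1} = {p \<in> Lab m k1. val t p < t k1}"
      unfolding Lab_def val_def k1 by (auto simp: less_Suc_eq)
    then have ca: "card {w \<in> J. w < t k1} = e k1" using cnt t(3) k1 unfolding ev_def by simp
    have cJ: "card J = m * k" unfolding J_def using injv by (simp add: card_image card_Lab)
    have v1: "e k1 \<le> e k" using ee(2) Suc.prems k1 by simp
    have v2: "e k \<le> card J" using ee(1) Suc.prems cJ by simp
    obtain s where s: "t k1 < s" "card {w \<in> J. w < s} = e k" "\<forall>f\<in>t ` {..<k}. \<forall>z::int. s - f \<noteq> of_int z"
      using pick[OF fJ aJ, of "e k" "t ` {..<k}"] ca v1 v2 by auto
    define t' where "t' = t(k := s)"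
    have tle: "t i \<le> t k1" if "i < k" for i
      using t(1) that k1 by (cases "i = k1") (auto simp: less_Suc_eq intro: less_imp_le)
    have inc: "\<forall>i j. i < j \<and> j < Suc k \<longrightarrow> t' i < t' j"
      using t(1) tle s(1) unfolding t'_def by (auto simp: less_Suc_eq) (smt (verit))
    have ni: "\<forall>i j (z::int). i < j \<and> j < Suc k \<longrightarrow> t' j - t' i \<noteq> of_int z"
      using t(2) s(3) unfolding t'_def by (auto simp: less_Suc_eq)
    have evs: "ev m t' j = e j" if "j < Suc k" for j
    proof (cases "j = k")
      case True
      have "{p \<in> Lab m k. val t' p < t' k} = {p \<in> Lab m k. val t p < s}"
        unfolding t'_def Lab_def val_def by auto
      then show ?thesis using True s(2) cnt unfolding ev_def by simp
    next
      case False
      then have "j < k" using that by simp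
      then have "{p \<in> Lab m j. val t' p < t' j} = {p \<in> Lab m j. val t p < t j}"
        unfolding t'_def Lab_def val_def by auto
      then show ?thesis using t(3) \<open>j < k\<close> unfolding ev_def by simp
    qed
    show ?thesis using inc ni evs by blast
  qed
qed

lemma constr:
  assumes n: "1 \<le> n" and e: "e \<in> Eset n m"
  shows "\<exists>x \<in> GG n m. ehat n m x = e"
proof -
  obtain t where t: "\<forall>i j. i < j \<and> j < n \<longrightarrow> t i < t j"
      "\<forall>i j (z::int). i < j \<and> j < n \<longrightarrow> t j - t i \<noteq> of_int z" "\<forall>j<n. ev m t j = e j"
    using constr_t[OF e, of n] by auto
  define c where "c = (\<Sum>i<n. t i) / real n"
  define x where "x = (\<lambda>i. if i < n then t i - c else 0)"
  have "(\<Sum>i<n. x i) = (\<Sum>i<n. t i - c)" unfolding x_def by simp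
  also have "\<dots> = (\<Sum>i<n. t i) - real n * c" by (simp add: sum_subtractf)
  also have "\<dots> = 0" unfolding c_def using n by simp
  finally have xv: "x \<in> V_A n" unfolding V_A_def x_def by auto
  have xs: "x \<in> shi_complement n m"
    unfolding shi_complement_def shi_hyps_def using xv t(2) unfolding x_def by auto
  have xf: "x \<in> fund_chamber n" unfolding fund_chamber_def using xv t(1) unfolding x_def by auto
  have "ehat n m x = e"
  proof
    fix j show "ehat n m x j = e j"
    proof (cases "j < n")
      case True
      have "{p \<in> Lab m j. val x p < x j} = {p \<in> Lab m j. val t p < t j}"
        unfolding x_def Lab_def val_def using True by auto
      then show ?thesis using True t(3) unfolding ehat_def ev_def by simp
    next
      case False
      then show ?thesis using e unfolding ehat_def Eset_def by auto
    qed
  qed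
  then show ?thesis using xs xf unfolding GG_def by blast
qed



lemma Phi_bij: assumes m: "1 \<le> m" and n: "1 \<le> n"
  shows "bij_betw (Phi n m) (PosReg n m) (Eset n m)"
  unfolding bij_betw_def
proof
  show "inj_on (Phi n m) (PosReg n m)" using Phi_inj[OF m] .
  show "Phi n m ` PosReg n m = Eset n m"
  proof
    show "Phi n m ` PosReg n m \<subseteq> Eset n m"
      using PosReg_eq[OF m] Phi_CC[OF m] ehat_Eset by auto
    show "Eset n m \<subseteq> Phi n m ` PosReg n m"
    proof
      fix e assume "e \<in> Eset n m"
      then obtain x where x: "x \<in> GG n m" "ehat n m x = e" using constr[OF n] by blast
      have "CC n m x \<in> PosReg n m" using PosReg_eq[OF m] x by auto
      moreover have "Phi n m (CC n m x) = e" using Phi_CC[OF m x(1)] x by simp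
      ultimately show "e \<in> Phi n m ` PosReg n m" by force
    qed
  qed
qed

theorem proposition3p10:
  fixes n m :: nat and q :: "'a :: comm_semiring_1"
  assumes "n \<ge> 1" and "m \<ge> 1"
  shows "(\<Sum>R \<in> {R \<in> shi_regions n m. R \<subseteq> fund_chamber n}. q ^ shi_coh n m R)
       = (\<Sum>D \<in> dyck_paths m n. q ^ dyck_area m n D)"
proof -
  have n: "1 \<le> n" and m: "1 \<le> m" using assms by auto
  have "(\<Sum>R \<in> PosReg n m. q ^ shi_coh n m R) = (\<Sum>R \<in> PosReg n m. q ^ AEs n m (Phi n m R))"
  proof (rule sum.cong)
    fix R assume "R \<in> PosReg n m"
    then obtain x where x: "x \<in> GG n m" "R = CC n m x" using PosReg_eq[OF m] by auto
    show "q ^ shi_coh n m R = q ^ AEs n m (Phi n m R)"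
      using coh_eq[OF m n x(1)] Phi_CC[OF m x(1)] x(2) by simp
  qed simp
  also have "\<dots> = (\<Sum>e \<in> Eset n m. q ^ AEs n m e)"
    using sum.reindex_bij_betw[OF Phi_bij[OF m n], of "\<lambda>e. q ^ AEs n m e"] by simp
  also have "\<dots> = (\<Sum>D \<in> dyck_paths m n. q ^ dyck_area m n D)" by (rule RHS_eq[symmetric])
  finally show ?thesis unfolding PosReg_def .
qed

end
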